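(* For every $(i,j)\in\mathcal I_0$ there is an integer $z$ such that $F_{ij}F_{\mathcal I_1}=q^{z}F_{\mathcal I_1}F_{ij}$ in $U_q$.
   Context: Let $m,n\ge 1$, let $q$ be an indeterminate, and let indices range over $[1,m+n]$. Put $q_i=q$ if $i\le m$ and $q_i=q^{-1}$ if $i>m$. Let $\mathcal I_0=\{(i,j):1\le i<j\le m \text{ or } m+1\le i<j\le m+n\}$, $\mathcal I_1=\{(i,j):1\le i\le m<j\le m+n\}$. The quantum supergroup $U_q=U_q(\mathfrak{gl}(m|n))$ is the associative $\mathbb C(q)$-superalgebra generated by $K_j^{\pm1}$ ($j\in[1,m+n]$) and $E_{i,i+1},F_{i,i+1}$ ($1\le i<m+n$), where $K_j^{\pm1}$ and $E_{i,i+1},F_{i,i+1}$ for $i\ne m$ are even and $E_{m,m+1},F_{m,m+1}$ are odd, subject to: $K_iK_j=K_jK_i$, $K_iK_i^{-1}=1$; $K_iE_{j,j+1}K_i^{-1}=q_i^{\delta_{ij}-\delta_{i,j+1}}E_{j,j+1}$, $K_iF_{j,j+1}K_i^{-1}=q_i^{-(\delta_{ij}-\delta_{i,j+1})}F_{j,j+1}$; $[E_{i,i+1},F_{j,j+1}]=\delta_{ij}\frac{K_iK_{i+1}^{-1}-K_i^{-1}K_{i+1}}{q_i-q_i^{-1}}$; $E_{m,m+1}^2=F_{m,m+1}^2=0$; $E_{i,i+1}E_{j,j+1}=E_{j,j+1}E_{i,i+1}$ and $F_{i,i+1}F_{j,j+1}=F_{j,j+1}F_{i,i+1}$ for $|i-j|>1$;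 for $|i-j|=1$, $i\neq m$, and $X\in\{E,F\}$: $X_{i,i+1}^2X_{j,j+1}-(q+q^{-1})X_{i,i+1}X_{j,j+1}X_{i,i+1}+X_{j,j+1}X_{i,i+1}^2=0$; and $[E_{m-1,m+2},E_{m,m+1}]=[F_{m-1,m+2},F_{m,m+1}]=0$. Here for homogeneous $x,y$, $[x,y]=xy-(-1)^{\bar x\bar y}yx$. For $i<j$ with $j>i+1$, $E_{ij}=E_{ic}E_{cj}-q_c^{-1}E_{cj}E_{ic}$ and $F_{ij}=-q_cF_{ic}F_{cj}+F_{cj}F_{ic}$ for $i<c<j$ (independent of $c$); $E_{ij},F_{ij}$ are odd iff $(i,j)\in\mathcal I_1$. Order on $\mathcal I_1$: $(i,j)\prec(s,t)$ iff $j>t$, or $j=t$ and $i<s$. $F_{\mathcal I_1}$ is the product of all $F_{ij}$, $(i,j)\in\mathcal I_1$, taken in increasing $\prec$-order. *)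

theory Defs
  imports Complex_Main "HOL-Computational_Algebra.Polynomial" "HOL-Computational_Algebra.Fraction_Field"
begin

type_synonym Cq = "complex poly fract"

definition qX :: Cq where "qX = Fract [:0, 1:] 1"

definition qq :: "nat \<Rightarrow> nat \<Rightarrow> Cq" where
  "qq m i = (if i \<le> m then qX else inverse qX)"

definition I0 :: "nat \<Rightarrow> nat \<Rightarrow> (nat \<times> nat) set" where
  "I0 m n = {(i, j). (1 \<le> i \<and> i < j \<and> j \<le> m) \<or> (m + 1 \<le> i \<and> i < j \<and> j \<le> m + n)}"

definition I1 :: "nat \<Rightarrow> nat \<Rightarrow> (nat \<times> nat) set" where
  "I1 m n = {(i, j). 1 \<le> i \<and> i \<le> m \<and> m < j \<and> j \<le> m + n}"

text \<open>An algebra over C(q) is a ring with a ring homomorphism phi from C(q) into its centre;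
  scalar multiplication c.x is phi c * x.  E i stands for E_{i,i+1}, F i for F_{i,i+1},
  K i for K_i and Ki i for K_i^{-1}.
  The second argument of Er/Fr is the length j - i.\<close>

fun Er :: "(Cq \<Rightarrow> 'a::ring_1) \<Rightarrow> nat \<Rightarrow> (nat \<Rightarrow> 'a) \<Rightarrow> nat \<Rightarrow> nat \<Rightarrow> 'a" where
  "Er \<phi> m E i 0 = 0"
| "Er \<phi> m E i (Suc 0) = E i"
| "Er \<phi> m E i (Suc (Suc d)) =
     E i * Er \<phi> m E (i + 1) (Suc d) - \<phi> (inverse (qq m (i + 1))) * Er \<phi> m E (i + 1) (Suc d) * E i"

fun Fr :: "(Cq \<Rightarrow> 'a::ring_1) \<Rightarrow> nat \<Rightarrow> (nat \<Rightarrow> 'a) \<Rightarrow> nat \<Rightarrow> nat \<Rightarrow> 'a" where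
  "Fr \<phi> m F i 0 = 0"
| "Fr \<phi> m F i (Suc 0) = F i"
| "Fr \<phi> m F i (Suc (Suc d)) =
     - (\<phi> (qq m (i + 1)) * F i * Fr \<phi> m F (i + 1) (Suc d)) + Fr \<phi> m F (i + 1) (Suc d) * F i"

definition Eij :: "(Cq \<Rightarrow> 'a::ring_1) \<Rightarrow> nat \<Rightarrow> (nat \<Rightarrow> 'a) \<Rightarrow> nat \<Rightarrow> nat \<Rightarrow> 'a" where
  "Eij \<phi> m E i j = Er \<phi> m E i (j - i)"

definition Fij :: "(Cq \<Rightarrow> 'a::ring_1) \<Rightarrow> nat \<Rightarrow> (nat \<Rightarrow> 'a) \<Rightarrow> nat \<Rightarrow> nat \<Rightarrow> 'a" where
  "Fij \<phi> m F i j = Fr \<phi> m F i (j - i)"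

text \<open>The list of I_1 in increasing order: (i,j) before (s,t) iff j > t, or j = t and i < s.\<close>
definition I1_list :: "nat \<Rightarrow> nat \<Rightarrow> (nat \<times> nat) list" where
  "I1_list m n = concat (map (\<lambda>j. map (\<lambda>i. (i, j)) [1..<m + 1]) (rev [m + 1..<m + n + 1]))"

definition F_I1 :: "(Cq \<Rightarrow> 'a::ring_1) \<Rightarrow> nat \<Rightarrow> nat \<Rightarrow> (nat \<Rightarrow> 'a) \<Rightarrow> 'a" where
  "F_I1 \<phi> m n F = prod_list (map (\<lambda>(i, j). Fij \<phi> m F i j) (I1_list m n))"

text \<open>parity of the simple generators: E_{i,i+1}, F_{i,i+1} odd iff i = m;
  sign of the super commutator [x,y] = xy - (-1)^{|x||y|} yx.\<close>
definition ssign :: "nat \<Rightarrow> nat \<Rightarrow> nat \<Rightarrow> 'a::ring_1" where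
  "ssign m i j = (if i = m \<and> j = m then -1 else 1)"

text \<open>The defining relations of U_q(gl(m|n)) holding for elements K, Ki, E, F of an algebra
  (phi, 'a) over C(q).  Every such datum receives a unique map from U_q, and U_q itself is such a datum.\<close>
definition Uq_rels :: "nat \<Rightarrow> nat \<Rightarrow> (Cq \<Rightarrow> 'a::ring_1) \<Rightarrow> (nat \<Rightarrow> 'a) \<Rightarrow> (nat \<Rightarrow> 'a)
    \<Rightarrow> (nat \<Rightarrow> 'a) \<Rightarrow> (nat \<Rightarrow> 'a) \<Rightarrow> bool" where
  "Uq_rels m n \<phi> K Ki E F \<longleftrightarrow>
     (\<phi> 1 = 1 \<and> (\<forall>a b. \<phi> (a + b) = \<phi> a + \<phi> b) \<and> (\<forall>a b. \<phi> (a * b) = \<phi> a * \<phi> b)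
      \<and> (\<forall>a x. \<phi> a * x = x * \<phi> a))
   \<and> (\<forall>i\<in>{1..m+n}. \<forall>j\<in>{1..m+n}. K i * K j = K j * K i)
   \<and> (\<forall>i\<in>{1..m+n}. K i * Ki i = 1 \<and> Ki i * K i = 1)
   \<and> (\<forall>i\<in>{1..m+n}. \<forall>j\<in>{1..<m+n}.
        K i * E j * Ki i = \<phi> (qq m i powi (of_bool (i = j) - of_bool (i = j + 1))) * E j
      \<and> K i * F j * Ki i = \<phi> (qq m i powi (- (of_bool (i = j) - of_bool (i = j + 1)))) * F j)
   \<and> (\<forall>i\<in>{1..<m+n}. \<forall>j\<in>{1..<m+n}.
        E i * F j - ssign m i j * F j * E i =
          (if i = j then \<phi> (inverse (qq m i - inverse (qq m i))) * (K i * Ki (i + 1) - Ki i * K (i + 1))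
           else 0))
   \<and> E m * E m = 0 \<and> F m * F m = 0
   \<and> (\<forall>i\<in>{1..<m+n}. \<forall>j\<in>{1..<m+n}. (i + 1 < j \<or> j + 1 < i) \<longrightarrow>
        E i * E j = E j * E i \<and> F i * F j = F j * F i)
   \<and> (\<forall>i\<in>{1..<m+n}. \<forall>j\<in>{1..<m+n}. (i + 1 = j \<or> j + 1 = i) \<and> i \<noteq> m \<longrightarrow>
        E i * E i * E j - \<phi> (qX + inverse qX) * E i * E j * E i + E j * E i * E i = 0
      \<and> F i * F i * F j - \<phi> (qX + inverse qX) * F i * F j * F i + F j * F i * F i = 0)
   \<and> (2 \<le> m \<and> 2 \<le> n \<longrightarrow>
        Eij \<phi> m E (m - 1) (m + 2) * E m + E m * Eij \<phi> m E (m - 1) (m + 2) = 0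
      \<and> Fij \<phi> m F (m - 1) (m + 2) * F m + F m * Fij \<phi> m F (m - 1) (m + 2) = 0)"

end

theory Submission
  imports Defs
begin


locale sc =
  fixes \<phi> :: "Cq \<Rightarrow> 'a::ring_1"
  assumes p1: "\<phi> 1 = 1" and padd: "\<And>a b. \<phi> (a + b) = \<phi> a + \<phi> b"
   and pmult: "\<And>a b. \<phi> (a * b) = \<phi> a * \<phi> b" and pcomm: "\<And>a x. \<phi> a * x = x * \<phi> a"
begin

lemma p0: "\<phi> 0 = 0" using padd[of 0 0] by simp
lemma pneg: "\<phi> (- a) = - \<phi> a"
proof -
  have "\<phi> a + \<phi> (-a) = 0" using padd[of a "-a"] p0 by simp
  then show ?thesis by (metis add.commute eq_neg_iff_add_eq_0)
qed
lemma pdiff: "\<phi> (a - b) = \<phi> a - \<phi> b" using padd[of a "-b"] pneg by simp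
lemma pinv: "c \<noteq> 0 \<Longrightarrow> \<phi> c * \<phi> (inverse c) = 1" by (simp flip: pmult add: p1)
lemma pinv': "c \<noteq> 0 \<Longrightarrow> \<phi> (inverse c) * \<phi> c = 1" by (simp flip: pmult add: p1)

lemma pc1: "NO_MATCH (\<phi> d) x \<Longrightarrow> x * \<phi> c = \<phi> c * x" by (simp add: pcomm)
lemma pc2: "NO_MATCH (\<phi> d) x \<Longrightarrow> x * (\<phi> c * y) = \<phi> c * (x * y)"
  by (metis mult.assoc pcomm)
lemma pm2: "\<phi> c * (\<phi> d * y) = \<phi> (c * d) * y" by (simp add: pmult mult.assoc)
lemma pm1: "\<phi> c * \<phi> d = \<phi> (c * d)" by (simp add: pmult)

lemmas ps = pc1 pc2 pm2 pm1

definition br :: "Cq \<Rightarrow> 'a \<Rightarrow> 'a \<Rightarrow> 'a" where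
  "br a x y = - (\<phi> a * x * y) + y * x"

definition qc :: "'a \<Rightarrow> 'a \<Rightarrow> Cq \<Rightarrow> bool" where
  "qc x y c \<longleftrightarrow> x * y = \<phi> c * y * x"

lemma jacobi: assumes "A * Y = Y * A"
  shows "br \<alpha> A (br \<beta> b Y) = br \<beta> (br \<alpha> A b) Y"
proof -
  have e: "A * (Y * z) = Y * (A * z)" for z by (metis assms mult.assoc)
  show ?thesis unfolding br_def
    by (simp add: algebra_simps ps e assms mult.commute)
qed

lemma qc_mult1: "qc u Z c1 \<Longrightarrow> qc v Z c2 \<Longrightarrow> qc (u * v) Z (c1 * c2)"
  unfolding qc_def
proof -
  assume a: "u * Z = \<phi> c1 * Z * u" and b: "v * Z = \<phi> c2 * Z * v"
  have "u * v * Z = u * (\<phi> c2 * Z * v)" by (simp add: mult.assoc b)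
  also have "\<dots> = \<phi> c2 * ((u * Z) * v)" by (simp add: ps mult.assoc)
  also have "\<dots> = \<phi> (c1 * c2) * Z * (u * v)" by (simp add: a ps mult.assoc mult.commute)
  finally show "u * v * Z = \<phi> (c1 * c2) * Z * (u * v)" .
qed

lemma qc_mult2: "qc x u c1 \<Longrightarrow> qc x v c2 \<Longrightarrow> qc x (u * v) (c1 * c2)"
  unfolding qc_def
proof -
  assume a: "x * u = \<phi> c1 * u * x" and b: "x * v = \<phi> c2 * v * x"
  have "x * (u * v) = \<phi> c1 * u * (x * v)" by (simp add: mult.assoc[symmetric] a)
  also have "\<dots> = \<phi> (c1 * c2) * (u * v) * x" by (simp add: b ps mult.assoc)
  finally show "x * (u * v) = \<phi> (c1 * c2) * (u * v) * x" .
qed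

lemma qc_br1: assumes "qc u Z c1" "qc v Z c2" shows "qc (br a u v) Z (c1 * c2)"
proof -
  have 1: "u * v * Z = \<phi> (c1*c2) * Z * (u * v)" using qc_mult1[OF assms] qc_def by blast
  have 2: "v * u * Z = \<phi> (c1*c2) * Z * (v * u)" using qc_mult1[OF assms(2,1)] qc_def
    by (metis mult.commute)
  have "br a u v * Z = - (\<phi> a * (u * v * Z)) + v * u * Z"
    unfolding br_def by (simp add: algebra_simps)
  also have "\<dots> = \<phi> (c1*c2) * Z * br a u v" unfolding 1 2 br_def
    by (simp add: algebra_simps ps mult.commute)
  finally show ?thesis unfolding qc_def .
qed

lemma qc_br2: assumes "qc x u c1" "qc x v c2" shows "qc x (br a u v) (c1 * c2)"
proof -
  have 1: "x * (u * v) = \<phi> (c1*c2) * (u * v) * x" using qc_mult2[OF assms] qc_def by blast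
  have 2: "x * (v * u) = \<phi> (c1*c2) * (v * u) * x" using qc_mult2[OF assms(2,1)] qc_def
    by (metis mult.commute)
  have "x * br a u v = - (\<phi> a * (x * (u * v))) + x * (v * u)"
    unfolding br_def by (simp add: algebra_simps ps)
  also have "\<dots> = \<phi> (c1*c2) * br a u v * x" unfolding 1 2 br_def
    by (simp add: algebra_simps ps mult.commute)
  finally show ?thesis unfolding qc_def .
qed

lemma qc_prod1: "(\<forall>u\<in>set L. qc u Z c) \<Longrightarrow> qc (prod_list L) Z (c ^ length L)"
proof (induction L)
  case Nil then show ?case by (simp add: qc_def p1)
next
  case (Cons a L) then show ?case using qc_mult1 by fastforce
qed

lemma qc_prod2: "(\<forall>u\<in>set L. qc x u c) \<Longrightarrow> qc x (prod_list L) (c ^ length L)"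
proof (induction L)
  case Nil then show ?case by (simp add: qc_def p1)
next
  case (Cons a L) then show ?case using qc_mult2 by fastforce
qed

definition SS :: "Cq \<Rightarrow> 'a \<Rightarrow> 'a \<Rightarrow> 'a" where
  "SS s b y = b * b * y - \<phi> s * b * y * b + y * b * b"

lemma SS_lift: assumes "SS s b y = 0" "A * b = b * A"
  shows "SS s b (br \<alpha> A y) = 0" "SS s b (br \<alpha> y A) = 0"
proof -
  have e: "A * (b * z) = b * (A * z)" for z by (metis assms(2) mult.assoc)
  have 1: "SS s b (A * y) = A * SS s b y" unfolding SS_def
    by (simp add: algebra_simps ps e assms(2))
  have 2: "SS s b (y * A) = SS s b y * A" unfolding SS_def
    by (simp add: algebra_simps ps e assms(2))
  have "SS s b (br \<alpha> A y) = - (\<phi> \<alpha> * SS s b (A * y)) + SS s b (y * A)"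
    unfolding SS_def br_def by (simp add: algebra_simps ps)
  then show "SS s b (br \<alpha> A y) = 0" using 1 2 assms(1) by simp
  have "SS s b (br \<alpha> y A) = - (\<phi> \<alpha> * SS s b (y * A)) + SS s b (A * y)"
    unfolding SS_def br_def by (simp add: algebra_simps ps)
  then show "SS s b (br \<alpha> y A) = 0" using 1 2 assms(1) by simp
qed

lemma sq_zero: assumes Y: "Y * Y = 0" and S: "SS s b Y = 0"
  and r: "r * r - r * s + 1 = 0" and s: "s \<noteq> 0"
  shows "br r b Y * br r b Y = 0" "br r Y b * br r Y b = 0"
proof -
  let ?s = s
  have Yz: "Y * (Y * z) = 0" for z by (metis Y mult.assoc mult_zero_left)
  have S': "b * (b * Y) = \<phi> ?s * (b * (Y * b)) - Y * (b * b)"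
    using S unfolding SS_def by (simp add: algebra_simps ps)
  have i: "Y * (b * (b * Y)) = \<phi> ?s * (Y * (b * (Y * b)))"
    by (simp add: S' algebra_simps ps Yz)
  have S'': "Y * (b * b) = \<phi> ?s * (b * (Y * b)) - b * (b * Y)"
    using S' by (simp add: algebra_simps)
  have ii: "Y * (b * (b * Y)) = \<phi> ?s * (b * (Y * (b * Y)))"
  proof -
    have "Y * (b * (b * Y)) = (Y * (b * b)) * Y" by (simp add: mult.assoc)
    also have "\<dots> = \<phi> ?s * (b * (Y * (b * Y)))" unfolding S''
      by (simp add: algebra_simps ps Yz Y)
    finally show ?thesis .
  qed
  have W0: "\<phi> ?s * (Y * (b * (Y * b)) - b * (Y * (b * Y))) = 0"
    using i ii by (simp add: algebra_simps)
  have W: "Y * (b * (Y * b)) = b * (Y * (b * Y))"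
  proof -
    have "\<phi> (inverse ?s) * (\<phi> ?s * (Y * (b * (Y * b)) - b * (Y * (b * Y)))) = 0"
      by (simp add: W0)
    then have "(\<phi> (inverse ?s) * \<phi> ?s) * (Y * (b * (Y * b)) - b * (Y * (b * Y))) = 0"
      by (simp add: mult.assoc)
    then show ?thesis using pinv'[OF s] by simp
  qed
  have rr: "\<phi> (r * r) - \<phi> r * \<phi> ?s + 1 = 0"
    using arg_cong[OF r, of \<phi>] by (simp add: pdiff padd pmult p1 p0)
  have rr2: "\<phi> (r * r) * w - \<phi> (r * ?s) * w + w = 0" for w
  proof -
    have "(\<phi> (r * r) - \<phi> r * \<phi> ?s + 1) * w = 0" by (simp add: rr)
    then show ?thesis by (simp add: algebra_simps pmult)
  qed
  show "br r b Y * br r b Y = 0" unfolding br_def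
    using rr2[of "b * (Y * (b * Y))"]
    by (simp add: algebra_simps ps Yz Y ii W mult.commute)
  show "br r Y b * br r Y b = 0" unfolding br_def
    using rr2[of "b * (Y * (b * Y))"]
    by (simp add: algebra_simps ps Yz Y ii W mult.commute)
qed

lemma left_end: assumes S: "SS s b c = 0"
  and r: "r * r - r * s + 1 = 0"
  shows "qc b (br r b c) r"
proof -
  let ?s = s
  have S': "b * (b * c) = \<phi> ?s * (b * (c * b)) - c * (b * b)"
    using S unfolding SS_def by (simp add: algebra_simps ps)
  have rr: "\<phi> (r * r) * w - \<phi> (r * ?s) * w + w = 0" for w
  proof -
    have "\<phi> (r * r - r * ?s + 1) * w = 0" by (simp add: r p0)
    then show ?thesis by (simp add: algebra_simps pdiff padd p1)
  qed
  have rr': "\<phi> (r * ?s) * w = \<phi> (r * r) * w + w" for w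
    using rr[of w] by (simp add: algebra_simps)
  show ?thesis unfolding qc_def br_def
    by (simp add: algebra_simps ps S' rr' mult.commute)
qed

lemma right_end: assumes S: "SS s b y = 0"
  and r: "r * r - r * s + 1 = 0" and r0: "r \<noteq> 0"
  shows "qc b (br r y b) (inverse r)"
proof -
  let ?s = s
  have S': "b * (b * y) = \<phi> ?s * (b * (y * b)) - y * (b * b)"
    using S unfolding SS_def by (simp add: algebra_simps ps)
  have si: "?s = r + inverse r"
  proof -
    have "r * (?s - r) = 1" using r by (simp add: algebra_simps)
    then have "?s - r = inverse r" using r0 by (metis inverse_unique mult.commute)
    then show ?thesis by (simp add: algebra_simps)
  qed
  have ri: "\<phi> (inverse r * r) = 1" "\<phi> (r * inverse r) = 1" using r0 by (simp_all add: p1)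
  show ?thesis unfolding qc_def br_def
    by (simp add: algebra_simps ps S' si padd ri mult.commute)
qed

lemma rank3: assumes ac: "a * c = c * a"
  and L: "qc b (br r b c) r" and R: "qc b (br r a b) (inverse r)"
  and r0: "r \<noteq> 0" and r1: "1 + r * r \<noteq> 0"
  shows "qc b (br r a (br r b c)) 1"
proof -
  define Y where "Y = br r b c"
  define Z where "Z = br r a b"
  define X where "X = br r a Y"
  have XZ: "X = br r Z c" unfolding X_def Y_def Z_def using jacobi[OF ac] by simp
  have ri: "\<phi> r * \<phi> (inverse r) = 1" "\<phi> (inverse r) * \<phi> r = 1"
    using pinv[OF r0] pinv'[OF r0] by auto
  have bY: "b * Y = \<phi> r * Y * b" using L unfolding qc_def Y_def .
  have Yb: "Y * b = \<phi> (inverse r) * (b * Y)"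
    by (simp add: bY mult.assoc[symmetric] ri(2))
  have bZ: "b * Z = \<phi> (inverse r) * Z * b" using R unfolding qc_def Z_def .
  have Zb: "Z * b = \<phi> r * (b * Z)"
    by (simp add: bZ mult.assoc[symmetric] ri(1))
  have ba: "b * a = Z + \<phi> r * (a * b)" unfolding Z_def br_def by (simp add: mult.assoc)
  have cb: "c * b = Y + \<phi> r * (b * c)" unfolding Y_def br_def by (simp add: mult.assoc)
  have e1: "b * X = - (\<phi> r * ((Z + \<phi> r * (a * b)) * Y)) + \<phi> r * (Y * (Z + \<phi> r * (a * b)))"
  proof -
    have "b * X = - (\<phi> r * ((b * a) * Y)) + (b * Y) * a"
      unfolding X_def br_def by (simp add: algebra_simps ps)
    also have "\<dots> = - (\<phi> r * ((b * a) * Y)) + \<phi> r * (Y * (b * a))"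
      by (simp add: bY ps mult.assoc)
    finally show ?thesis by (simp only: ba)
  qed
  have e2: "X * b = - (a * b * Y) + Y * a * b"
  proof -
    have "X * b = - (\<phi> r * (a * (Y * b))) + Y * a * b"
      unfolding X_def br_def by (simp add: algebra_simps ps)
    then show ?thesis by (simp add: Yb ps mult.assoc[symmetric] pm1 r0 p1)
  qed
  have e3: "b * X = - (Z * b * c) + b * c * Z"
  proof -
    have "b * X = - (\<phi> r * ((b * Z) * c)) + b * c * Z"
      unfolding XZ br_def by (simp add: algebra_simps ps)
    then show ?thesis by (simp add: bZ ps mult.assoc pm1 r0 p1)
  qed
  have e4: "X * b = - (\<phi> r * (Z * (Y + \<phi> r * (b * c)))) + \<phi> r * ((Y + \<phi> r * (b * c)) * Z)"
  proof -
    have "X * b = - (\<phi> r * (Z * (c * b))) + c * (Z * b)"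
      unfolding XZ br_def by (simp add: algebra_simps ps)
    also have "\<dots> = - (\<phi> r * (Z * (c * b))) + \<phi> r * ((c * b) * Z)"
      by (simp add: Zb ps mult.assoc)
    finally show ?thesis by (simp only: cb)
  qed
  define D where "D = b * X - X * b"
  define E1 where "E1 = - (\<phi> r * ((Z + \<phi> r * (a * b)) * Y)) + \<phi> r * (Y * (Z + \<phi> r * (a * b)))"
  define E2 where "E2 = - (a * b * Y) + Y * a * b"
  define E3 where "E3 = - (Z * b * c) + b * c * Z"
  define E4 where "E4 = - (\<phi> r * (Z * (Y + \<phi> r * (b * c)))) + \<phi> r * ((Y + \<phi> r * (b * c)) * Z)"
  have d1: "D = E1 - E2" unfolding D_def E1_def E2_def using e1 e2 by simp
  have d2: "D = E3 - E4" unfolding D_def E3_def E4_def using e3 e4 by simp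
  have "D + D = (E1 - E2) + (E3 - E4)" by (metis d1 d2)
  also have "\<dots> = \<phi> (1 - r * r) * (E3 - E2)" unfolding E1_def E2_def E3_def E4_def
    by (simp add: algebra_simps ps pdiff p1 mult.commute)
  also have "\<dots> = \<phi> (1 - r * r) * D" unfolding D_def E2_def E3_def e2 e3 ..
  finally have DD: "D + D = \<phi> (1 - r * r) * D" .
  have "\<phi> (1 + r * r) * D = 0"
    using DD by (simp add: padd pdiff p1 algebra_simps)
  then have "\<phi> (inverse (1 + r * r)) * (\<phi> (1 + r * r) * D) = 0" by simp
  then have "D = 0" using pinv'[OF r1] by (simp add: mult.assoc[symmetric])
  then show ?thesis unfolding qc_def D_def X_def Y_def by (simp add: p1)
qed

lemma crossing: assumes yp: "yp = br \<alpha> A y" and xp: "xp = br \<alpha> A x" and x: "x = br \<beta> y f"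
  and yy: "y * y = 0" and nest: "y * xp = \<phi> c * xp * y"
  shows "\<phi> (\<alpha> * \<beta>) * (yp * x) = - (x * yp) - \<phi> (\<alpha> + \<beta> * c) * (xp * y)"
proof -
  have yyz: "y * (y * z) = 0" for z by (metis yy mult.assoc mult_zero_left)
  have xy: "x * y = - (\<phi> \<beta> * (y * x))" unfolding x br_def by (simp add: algebra_simps ps yyz yy)
  have Ax: "\<phi> \<alpha> * (A * x) = x * A - xp" unfolding xp br_def by (simp add: mult.assoc)
  have Ay: "\<phi> \<alpha> * (A * y) = y * A - yp" unfolding yp br_def by (simp add: mult.assoc)
  have t1: "\<phi> (\<alpha> * \<beta>) * (- (\<phi> \<alpha> * (A * (y * x)))) = x * y * A - x * yp - \<phi> \<alpha> * (xp * y)"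
  proof -
    have "\<phi> (\<alpha> * \<beta>) * (- (\<phi> \<alpha> * (A * (y * x)))) = \<phi> \<alpha> * (A * (- (\<phi> \<alpha> * (\<phi> \<beta> * (y * x)))))"
      by (simp add: ps mult.commute)
    also have "\<dots> = \<phi> \<alpha> * (\<phi> \<alpha> * (A * (x * y)))" by (simp add: xy ps)
    also have "\<dots> = \<phi> \<alpha> * ((\<phi> \<alpha> * (A * x)) * y)" by (simp add: ps mult.assoc)
    also have "\<dots> = x * (\<phi> \<alpha> * (A * y)) - \<phi> \<alpha> * (xp * y)" unfolding Ax by (simp add: algebra_simps ps)
    also have "\<dots> = x * y * A - x * yp - \<phi> \<alpha> * (xp * y)" unfolding Ay by (simp add: algebra_simps)
    finally show ?thesis .
  qed
  have t2: "\<phi> (\<alpha> * \<beta>) * (y * (A * x)) = - (x * y * A) - \<phi> (\<beta> * c) * (xp * y)"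
  proof -
    have "\<phi> (\<alpha> * \<beta>) * (y * (A * x)) = \<phi> \<beta> * (y * (\<phi> \<alpha> * (A * x)))"
      by (simp add: ps mult.commute)
    also have "\<dots> = (\<phi> \<beta> * (y * x)) * A - \<phi> \<beta> * (y * xp)" unfolding Ax by (simp add: algebra_simps ps)
    also have "\<dots> = - (x * y * A) - \<phi> (\<beta> * c) * (xp * y)"
    proof -
      have xy': "x * (y * z) = - (\<phi> \<beta> * (y * (x * z)))" for z by (metis xy mult.assoc ps(2) minus_mult_left)
      show ?thesis by (simp add: xy' nest ps mult.assoc)
    qed
    finally show ?thesis .
  qed
  have "\<phi> (\<alpha> * \<beta>) * (yp * x) = \<phi> (\<alpha> * \<beta>) * (- (\<phi> \<alpha> * (A * (y * x)))) + \<phi> (\<alpha> * \<beta>) * (y * (A * x))"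
    unfolding yp br_def by (simp add: algebra_simps)
  also have "\<dots> = - (x * yp) - \<phi> (\<alpha> + \<beta> * c) * (xp * y)" unfolding t1 t2
    by (simp add: algebra_simps padd)
  finally show ?thesis .
qed

end


lemma qX_nz: "qX \<noteq> (0::Cq)"
  unfolding qX_def Zero_fract_def by (simp add: eq_fract)

lemma qX_sq: "qX * qX \<noteq> (-1::Cq)"
proof
  assume "qX * qX = -1"
  then have "Fract ([:0,1:] * [:0,1:]) (1::complex poly) = Fract (-1) 1"
    unfolding qX_def by (simp add: One_fract_def)
  then have "[:0,1:] * [:0,1:] = (-1 :: complex poly)" by (simp add: eq_fract)
  then have "coeff ([:0,1:] * [:0,1:]) 2 = coeff (-1 :: complex poly) 2" by simp
  then show False by (simp add: coeff_mult numeral_2_eq_2)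
qed
lemma s_nz: "qX + inverse qX \<noteq> (0::Cq)"
proof
  assume "qX + inverse qX = 0"
  then have "qX * (qX + inverse qX) = 0" by simp
  then have "qX * qX + 1 = 0" using qX_nz by (simp add: distrib_left)
  then have "qX * qX = -1" by (simp add: eq_neg_iff_add_eq_0)
  then show False using qX_sq by simp
qed

lemma r_cases_eq: "r = qX \<or> r = inverse qX \<Longrightarrow> r * r - r * (qX + inverse qX) + 1 = (0::Cq)"
  using qX_nz by (auto simp: field_simps)

lemma r_cases_nz: "r = qX \<or> r = inverse qX \<Longrightarrow> r \<noteq> (0::Cq)"
  using qX_nz by auto

lemma r_cases_1rr: "r = qX \<or> r = inverse qX \<Longrightarrow> 1 + r * r \<noteq> (0::Cq)"
proof
  assume r: "r = qX \<or> r = inverse qX" and z: "1 + r * r = 0"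
  show False
  proof (cases "r = qX")
    case True then show False using z qX_sq by (simp add: eq_neg_iff_add_eq_0 add.commute)
  next
    case False
    then have ri: "r = inverse qX" using r by auto
    have "qX * qX * (1 + r * r) = 0" using z by simp
    moreover have "qX * qX * (1 + r * r) = qX * qX + 1" unfolding ri using qX_nz by (simp add: field_simps)
    ultimately have "qX * qX + 1 = 0" by simp
    then show False using qX_sq by (simp add: eq_neg_iff_add_eq_0)
  qed
qed

lemma qq_cases: "qq m i = qX \<or> qq m i = inverse qX" unfolding qq_def by auto

locale uq =
  fixes m n :: nat and \<phi> :: "Cq \<Rightarrow> 'a::ring_1" and K Ki E F :: "nat \<Rightarrow> 'a"
  assumes rels: "Uq_rels m n \<phi> K Ki E F" and m1: "1 \<le> m" and n1: "1 \<le> n"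

sublocale uq \<subseteq> sc \<phi>
  proof -
  have "\<phi> 1 = 1 \<and> (\<forall>a b. \<phi> (a + b) = \<phi> a + \<phi> b) \<and> (\<forall>a b. \<phi> (a * b) = \<phi> a * \<phi> b) \<and> (\<forall>a x. \<phi> a * x = x * \<phi> a)"
    using rels unfolding Uq_rels_def by (rule conjunct1)
  then show "sc \<phi>" by unfold_locales blast+
qed

context uq
begin

abbreviation R :: "nat \<Rightarrow> nat \<Rightarrow> 'a" where "R i j \<equiv> Fr \<phi> m F i (j - i)"
abbreviation "sQ \<equiv> qX + inverse qX"

lemma rel_far: "\<forall>i\<in>{1..<m+n}. \<forall>j\<in>{1..<m+n}. (i + 1 < j \<or> j + 1 < i) \<longrightarrow>
        E i * E j = E j * E i \<and> F i * F j = F j * F i"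
  using rels unfolding Uq_rels_def apply (elim conjE) by assumption

lemma rel_serre: "\<forall>i\<in>{1..<m+n}. \<forall>j\<in>{1..<m+n}. (i + 1 = j \<or> j + 1 = i) \<and> i \<noteq> m \<longrightarrow>
        E i * E i * E j - \<phi> (qX + inverse qX) * E i * E j * E i + E j * E i * E i = 0
      \<and> F i * F i * F j - \<phi> (qX + inverse qX) * F i * F j * F i + F j * F i * F i = 0"
  using rels unfolding Uq_rels_def apply (elim conjE) by assumption

lemma rel_super: "(2 \<le> m \<and> 2 \<le> n \<longrightarrow>
        Eij \<phi> m E (m - 1) (m + 2) * E m + E m * Eij \<phi> m E (m - 1) (m + 2) = 0
      \<and> Fij \<phi> m F (m - 1) (m + 2) * F m + F m * Fij \<phi> m F (m - 1) (m + 2) = 0)"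
  using rels unfolding Uq_rels_def apply (elim conjE) by assumption

lemma Fm2: "F m * F m = 0"
  using rels unfolding Uq_rels_def apply (elim conjE) by assumption

lemma Ffar: assumes "1 \<le> i" "i < m + n" "1 \<le> j" "j < m + n" "i + 1 < j \<or> j + 1 < i"
  shows "F i * F j = F j * F i"
proof -
  have mem: "i \<in> {1..<m+n}" "j \<in> {1..<m+n}" using assms by auto
  have "(i + 1 < j \<or> j + 1 < i) \<longrightarrow> E i * E j = E j * E i \<and> F i * F j = F j * F i"
    using rel_far mem by blast
  then show ?thesis using assms(5) by blast
qed

lemma serre: assumes "1 \<le> i" "i < m + n" "1 \<le> j" "j < m + n" "i + 1 = j \<or> j + 1 = i" "i \<noteq> m"
  shows "SS sQ (F i) (F j) = 0"
proof -
  have mem: "i \<in> {1..<m+n}" "j \<in> {1..<m+n}" using assms by auto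
  have "(i + 1 = j \<or> j + 1 = i) \<and> i \<noteq> m \<longrightarrow>
        E i * E i * E j - \<phi> (qX + inverse qX) * E i * E j * E i + E j * E i * E i = 0
      \<and> F i * F i * F j - \<phi> (qX + inverse qX) * F i * F j * F i + F j * F i * F i = 0"
    using rel_serre mem by blast
  then show ?thesis using assms(5,6) unfolding SS_def by blast
qed

lemma super: "2 \<le> m \<Longrightarrow> 2 \<le> n \<Longrightarrow> R (m - 1) (m + 2) * F m + F m * R (m - 1) (m + 2) = 0"
  using rel_super unfolding Fij_def by blast

lemma R1: "R i (Suc i) = F i" by simp

lemma Rstep: "i + 2 \<le> j \<Longrightarrow> R i j = br (qq m (i + 1)) (F i) (R (i + 1) j)"
proof -
  assume "i + 2 \<le> j"
  define d where "d = j - i - 2"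
  have d: "j - i = Suc (Suc d)" unfolding d_def using \<open>i + 2 \<le> j\<close> by arith
  then have "j - (i + 1) = Suc d" by simp
  then show ?thesis using d by (simp add: br_def)
qed

lemma qc1_iff: "qc x y 1 \<longleftrightarrow> x * y = y * x" unfolding qc_def by (simp add: p1)

lemma hom1: "i < j \<Longrightarrow> (\<And>r. i \<le> r \<Longrightarrow> r < j \<Longrightarrow> qc (F r) Z (g r)) \<Longrightarrow> qc (R i j) Z (\<Prod>r\<in>{i..<j}. g r)"
proof (induction "j - i" arbitrary: i)
  case 0 then show ?case by simp
next
  case (Suc d)
  show ?case
  proof (cases "j = i + 1")
    case True then show ?thesis using Suc.prems by simp
  next
    case False
    then have ij: "i + 2 \<le> j" using Suc.prems by simp
    have IH: "qc (R (i+1) j) Z (\<Prod>r\<in>{i+1..<j}. g r)"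
      using Suc.hyps(1)[of "i+1"] Suc.hyps(2) Suc.prems ij by simp
    have "qc (R i j) Z (g i * (\<Prod>r\<in>{i+1..<j}. g r))"
      unfolding Rstep[OF ij] using qc_br1[OF Suc.prems(2)[of i] IH] Suc.prems by simp
    moreover have "{i..<j} = insert i {i+1..<j}" using ij by auto
    ultimately show ?thesis by simp
  qed
qed

lemma hom2: "i < j \<Longrightarrow> (\<And>r. i \<le> r \<Longrightarrow> r < j \<Longrightarrow> qc Z (F r) (g r)) \<Longrightarrow> qc Z (R i j) (\<Prod>r\<in>{i..<j}. g r)"
proof (induction "j - i" arbitrary: i)
  case 0 then show ?case by simp
next
  case (Suc d)
  show ?case
  proof (cases "j = i + 1")
    case True then show ?thesis using Suc.prems by simp
  next
    case False
    then have ij: "i + 2 \<le> j" using Suc.prems by simp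
    have IH: "qc Z (R (i+1) j) (\<Prod>r\<in>{i+1..<j}. g r)"
      using Suc.hyps(1)[of "i+1"] Suc.hyps(2) Suc.prems ij by simp
    have "qc Z (R i j) (g i * (\<Prod>r\<in>{i+1..<j}. g r))"
      unfolding Rstep[OF ij] using qc_br2[OF Suc.prems(2)[of i] IH] Suc.prems by simp
    moreover have "{i..<j} = insert i {i+1..<j}" using ij by auto
    ultimately show ?thesis by simp
  qed
qed

lemma hom1': "i < j \<Longrightarrow> (\<And>r. i \<le> r \<Longrightarrow> r < j \<Longrightarrow> qc (F r) Z 1) \<Longrightarrow> qc (R i j) Z 1"
  using hom1[of i j Z "\<lambda>_. 1"] by simp

lemma hom2': "i < j \<Longrightarrow> (\<And>r. i \<le> r \<Longrightarrow> r < j \<Longrightarrow> qc Z (F r) 1) \<Longrightarrow> qc Z (R i j) 1"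
  using hom2[of i j Z "\<lambda>_. 1"] by simp

lemma farFR: "1 \<le> l \<Longrightarrow> l < m + n \<Longrightarrow> 1 \<le> i \<Longrightarrow> i < j \<Longrightarrow> j \<le> m + n \<Longrightarrow> l + 1 < i \<or> j < l
   \<Longrightarrow> qc (F l) (R i j) 1"
  by (rule hom2') (auto simp: qc1_iff intro!: Ffar)

lemma farRF: "1 \<le> l \<Longrightarrow> l < m + n \<Longrightarrow> 1 \<le> i \<Longrightarrow> i < j \<Longrightarrow> j \<le> m + n \<Longrightarrow> l + 1 < i \<or> j < l
   \<Longrightarrow> qc (R i j) (F l) 1"
  using farFR by (simp add: qc1_iff)

lemma farRR: "1 \<le> i \<Longrightarrow> i < j \<Longrightarrow> j < i' \<Longrightarrow> i' < j' \<Longrightarrow> j' \<le> m + n \<Longrightarrow> qc (R i j) (R i' j') 1"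
  by (rule hom1') (auto intro!: farFR)

lemma split: "1 \<le> i \<Longrightarrow> i < c \<Longrightarrow> c < j \<Longrightarrow> j \<le> m + n \<Longrightarrow> R i j = br (qq m c) (R i c) (R c j)"
proof (induction "c - i" arbitrary: c j rule: less_induct)
  case less
  show ?case
  proof (cases "c = i + 1")
    case True then show ?thesis using less.prems Rstep[of i j] by simp
  next
    case False
    then have c: "i < c - 1" using less.prems by simp
    have IH1: "R i j = br (qq m (c-1)) (R i (c-1)) (R (c-1) j)"
      using less.hyps[of "c-1" j] less.prems c by simp
    have IH2: "R i c = br (qq m (c-1)) (R i (c-1)) (R (c-1) c)"
      using less.hyps[of "c-1" c] less.prems c by simp
    have st: "R (c-1) j = br (qq m c) (F (c-1)) (R c j)"
      using Rstep[of "c-1" j] less.prems c by simp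
    have cm: "R i (c-1) * R c j = R c j * R i (c-1)"
      using farRR[of i "c-1" c j] less.prems c by (simp add: qc1_iff)
    have "c - (c - 1) = Suc 0" using c by arith
    then have "R (c-1) c = F (c-1)" by simp
    then show ?thesis unfolding IH1 IH2 st using jacobi[OF cm] by simp
  qed
qed

end


context uq
begin

lemma qq_le: "i \<le> m \<Longrightarrow> qq m i = qX" unfolding qq_def by simp
lemma qq_gt: "m < i \<Longrightarrow> qq m i = inverse qX" unfolding qq_def by simp
lemma qq_eq: "qq m i * qq m i - qq m i * sQ + 1 = 0" using r_cases_eq[OF qq_cases] .
lemma qq_nz: "qq m i \<noteq> 0" using r_cases_nz[OF qq_cases] .

lemma SS_start: assumes "k \<noteq> m" "1 \<le> k" "k + 1 < j" "j \<le> m + n"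
  shows "SS sQ (F k) (R (k+1) j) = 0"
proof (cases "j = k + 2")
  case True
  then have "R (k+1) j = F (k+1)" by simp
  then show ?thesis using serre[of k "k+1"] assms by simp
next
  case False
  then have st: "R (k+1) j = br (qq m (k+2)) (F (k+1)) (R (k+2) j)"
    using Rstep[of "k+1" j] assms by simp
  have c: "R (k+2) j * F k = F k * R (k+2) j"
    using farRF[of k "k+2" j] assms False by (simp add: qc1_iff)
  show ?thesis unfolding st using SS_lift(2)[OF serre[of k "k+1"] c] assms by simp
qed

lemma SS_end: assumes "l \<noteq> m" "1 \<le> i" "i < l" "l < m + n"
  shows "SS sQ (F l) (R i l) = 0"
proof (cases "i = l - 1")
  case True
  then have "l - i = Suc 0" using assms by arith
  then have "R i l = F (l - 1)" using True by simp
  then show ?thesis using serre[of l "l - 1"] assms by simp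
next
  case False
  have "l - (l - 1) = Suc 0" using assms by arith
  then have st: "R i l = br (qq m (l-1)) (R i (l-1)) (F (l-1))"
    using split[of i "l-1" l] assms False by simp
  have c: "R i (l-1) * F l = F l * R i (l-1)"
    using farRF[of l i "l-1"] assms False by (simp add: qc1_iff)
  show ?thesis unfolding st using SS_lift(1)[OF serre[of l "l-1"] c] assms by simp
qed

lemma sqz1: "1 \<le> i \<Longrightarrow> i \<le> m \<Longrightarrow> R i (m+1) * R i (m+1) = 0"
proof (induction "m - i" arbitrary: i)
  case 0
  then have "i = m" by simp
  then show ?case using Fm2 by simp
next
  case (Suc d)
  then have im: "i < m" by simp
  have IH: "R (i+1) (m+1) * R (i+1) (m+1) = 0" using Suc.hyps(1)[of "i+1"] Suc.hyps(2) Suc.prems im by simp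
  have st: "R i (m+1) = br (qq m (i+1)) (F i) (R (i+1) (m+1))" using Rstep[of i "m+1"] im by simp
  have S: "SS sQ (F i) (R (i+1) (m+1)) = 0" using SS_start[of i "m+1"] im Suc.prems n1 by simp
  show ?case unfolding st using sq_zero(1)[OF IH S qq_eq s_nz] .
qed

lemma sqz: "1 \<le> i \<Longrightarrow> i \<le> m \<Longrightarrow> m < t \<Longrightarrow> t \<le> m + n \<Longrightarrow> R i t * R i t = 0"
proof (induction t)
  case 0 then show ?case by simp
next
  case (Suc t)
  show ?case
  proof (cases "Suc t = m + 1")
    case True then show ?thesis using sqz1 Suc.prems by simp
  next
    case False
    then have tm: "m < t" using Suc.prems by simp
    have IH: "R i t * R i t = 0" using Suc.IH Suc.prems tm by simp
    have "Suc t - t = Suc 0" by simp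
    then have st: "R i (Suc t) = br (qq m t) (R i t) (F t)"
      using split[of i t "Suc t"] Suc.prems tm by simp
    have S: "SS sQ (F t) (R i t) = 0" using SS_end[of t i] Suc.prems tm by simp
    show ?thesis unfolding st using sq_zero(2)[OF IH S qq_eq s_nz] .
  qed
qed

lemma LE: assumes "k \<noteq> m" "1 \<le> k" "k + 1 < t" "t \<le> m + n"
  shows "qc (F k) (R k t) (qq m (k+1))"
proof -
  have base: "qc (F k) (R k (k+2)) (qq m (k+1))"
  proof -
    have "R k (k+2) = br (qq m (k+1)) (F k) (F (k+1))" using Rstep[of k "k+2"] by simp
    then show ?thesis using left_end[OF serre[of k "k+1"] qq_eq] assms by simp
  qed
  show ?thesis
  proof (cases "t = k + 2")
    case True then show ?thesis using base by simp
  next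
    case False
    then have st: "R k t = br (qq m (k+2)) (R k (k+2)) (R (k+2) t)"
      using split[of k "k+2" t] assms by simp
    have f: "qc (F k) (R (k+2) t) 1" using farFR[of k "k+2" t] assms False by simp
    show ?thesis unfolding st using qc_br2[OF base f] by simp
  qed
qed

lemma RE: assumes "a \<noteq> m" "1 \<le> i" "i < a" "a < m + n"
  shows "qc (F a) (R i (a+1)) (inverse (qq m a))"
proof -
  have "Suc a - a = Suc 0" by simp
  then have st: "R i (a+1) = br (qq m a) (R i a) (F a)"
    using split[of i a "a+1"] assms by simp
  show ?thesis unfolding st using right_end[OF SS_end[of a i] qq_eq qq_nz] assms by simp
qed

lemma core3: assumes "2 \<le> l" "l + 2 \<le> m + n"
  shows "qc (F l) (R (l-1) (l+2)) (if l = m then -1 else 1)"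
proof (cases "l = m")
  case True
  then have "R (l-1) (l+2) * F l + F l * R (l-1) (l+2) = 0" using super assms by simp
  then have "F l * R (l-1) (l+2) = - (R (l-1) (l+2) * F l)" by (simp add: eq_neg_iff_add_eq_0 add.commute)
  then show ?thesis using True unfolding qc_def by (simp add: pneg p1)
next
  case False
  define r where "r = qq m l"
  have r1: "qq m (l+1) = r" unfolding r_def qq_def using False by auto
  have e1: "R (l-1) (l+2) = br r (F (l-1)) (R l (l+2))"
    using Rstep[of "l-1" "l+2"] assms unfolding r_def by (simp add: numeral_3_eq_3)
  have e2: "R l (l+2) = br r (F l) (F (l+1))"
    using Rstep[of l "l+2"] r1 by simp
  have e3: "R (l-1) (l+1) = br r (F (l-1)) (F l)"
    using Rstep[of "l-1" "l+1"] assms unfolding r_def by simp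
  have ac: "F (l-1) * F (l+1) = F (l+1) * F (l-1)" using Ffar[of "l-1" "l+1"] assms by simp
  have L: "qc (F l) (br r (F l) (F (l+1))) r" using LE[of l "l+2"] False assms e2 r1 by simp
  have Rr: "qc (F l) (br r (F (l-1)) (F l)) (inverse r)" using RE[of l "l-1"] False assms e3
    unfolding r_def by simp
  show ?thesis unfolding e1 e2 using rank3[OF ac L Rr] False r_cases_nz[OF qq_cases] r_cases_1rr[OF qq_cases]
    unfolding r_def by simp
qed

lemma G2a: assumes "2 \<le> l" "l + 2 \<le> t" "t \<le> m + n"
  shows "qc (F l) (R (l-1) t) (if l = m then -1 else 1)"
proof (cases "t = l + 2")
  case True then show ?thesis using core3 assms by simp
next
  case False
  then have st: "R (l-1) t = br (qq m (l+2)) (R (l-1) (l+2)) (R (l+2) t)"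
    using split[of "l-1" "l+2" t] assms by simp
  have f: "qc (F l) (R (l+2) t) 1" using farFR[of l "l+2" t] assms False by simp
  show ?thesis unfolding st using qc_br2[OF core3[OF assms(1)] f] assms by simp
qed

lemma G2: assumes "1 \<le> i" "i < l" "l + 1 < t" "t \<le> m + n"
  shows "qc (F l) (R i t) (if l = m then -1 else 1)"
proof (cases "i = l - 1")
  case True then show ?thesis using G2a[of l t] assms by simp
next
  case False
  then have st: "R i t = br (qq m (l-1)) (R i (l-1)) (R (l-1) t)"
    using split[of i "l-1" t] assms by simp
  have f: "qc (F l) (R i (l-1)) 1" using farFR[of l i "l-1"] assms False by simp
  show ?thesis unfolding st using qc_br2[OF f G2a[of l t]] assms by simp
qed

end


context sc
begin
lemma col_abs: assumes "B * B = 0" shows "qc B (br \<alpha> A B) (- \<alpha>)"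
proof -
  have z: "B * (B * z) = 0" for z by (metis assms mult.assoc mult_zero_left)
  show ?thesis unfolding qc_def br_def by (simp add: algebra_simps ps z assms pneg)
qed
end

lemma prod_list_concat': "prod_list (concat xss) = prod_list (map prod_list xss)"
  by (induct xss) auto

lemma upt_split: "i \<le> j \<Longrightarrow> j \<le> l \<Longrightarrow> [i..<l] = [i..<j] @ [j..<l]"
  using upt_add_eq_append[of i j "l - j"] by simp

context uq
begin

definition Row :: "nat \<Rightarrow> 'a" where "Row t = prod_list (map (\<lambda>i. R i t) [1..<m+1])"

lemma FI1_rows: "F_I1 \<phi> m n F = prod_list (map Row (rev [m+1..<m+n+1]))"
  unfolding F_I1_def I1_list_def map_concat prod_list_concat' Row_def
  by (simp add: comp_def Fij_def)

definition Yp :: "nat \<Rightarrow> nat \<Rightarrow> 'a" where "Yp a p = prod_list (map (\<lambda>i. R i a) [1..<p+1])"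

lemma nestR: assumes "1 \<le> p" "p < j" "j \<le> m" "m < a" "a < m + n"
  shows "\<exists>c. qc (R j a) (R p (a+1)) c"
proof -
  have "qc (R j a) (R p (a+1)) (\<Prod>r\<in>{j..<a}. (if r = m then -1 else 1))"
  proof (rule hom1)
    show "j < a" using assms by simp
    fix r assume r: "j \<le> r" "r < a"
    show "qc (F r) (R p (a+1)) (if r = m then -1 else 1)"
      by (rule G2) (use assms r in auto)
  qed
  then show ?thesis by blast
qed

lemma crossR: assumes "1 \<le> p" "p < j" "j \<le> m" "m < a" "a < m + n"
  shows "\<exists>c0 c'. c0 \<noteq> 0 \<and> \<phi> c0 * (R p a * R j (a+1)) = - (R j (a+1) * R p a) - \<phi> c' * (R p (a+1) * R j a)"
proof -
  obtain c where c: "qc (R j a) (R p (a+1)) c" using nestR assms by blast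
  have yp: "R p a = br (qq m j) (R p j) (R j a)" using split[of p j a] assms by simp
  have xp: "R p (a+1) = br (qq m j) (R p j) (R j (a+1))" using split[of p j "a+1"] assms by simp
  have "Suc a - a = Suc 0" by simp
  then have x: "R j (a+1) = br (qq m a) (R j a) (F a)" using split[of j a "a+1"] assms by simp
  have yy: "R j a * R j a = 0" using sqz[of j a] assms by simp
  have nest: "R j a * R p (a+1) = \<phi> c * R p (a+1) * R j a" using c unfolding qc_def .
  have "qq m j * qq m a \<noteq> 0" using qq_nz by simp
  then show ?thesis using crossing[OF yp xp x yy nest] by blast
qed

lemma colq: assumes "1 \<le> j" "j < s" "s \<le> m" "m < a" "a < m + n"
  shows "qc (R s (a+1)) (R j (a+1)) (- qX)"
proof -
  have st: "R j (a+1) = br (qq m s) (R j s) (R s (a+1))" using split[of j s "a+1"] assms by simp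
  have "qq m s = qX" using qq_le assms by simp
  then show ?thesis unfolding st using col_abs[OF sqz[of s "a+1"]] assms by simp
qed

lemma Xx: assumes "1 \<le> j" "j \<le> m" "m < a" "a < m + n"
  shows "Row (a+1) * R j (a+1) = 0"
proof -
  have L: "[1..<m+1] = [1..<j] @ j # [j+1..<m+1]"
    using upt_split[of 1 j "m+1"] upt_conv_Cons[of j "m+1"] assms by simp
  define P1 where "P1 = prod_list (map (\<lambda>i. R i (a+1)) [1..<j])"
  define P2 where "P2 = prod_list (map (\<lambda>i. R i (a+1)) [j+1..<m+1])"
  have rw: "Row (a+1) = P1 * (R j (a+1) * P2)" unfolding Row_def P1_def P2_def L by simp
  have "qc P2 (R j (a+1)) ((- qX) ^ length (map (\<lambda>i. R i (a+1)) [j+1..<m+1]))"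
    unfolding P2_def
  proof (rule qc_prod1, intro ballI)
    fix u assume "u \<in> set (map (\<lambda>i. R i (a+1)) [j+1..<m+1])"
    then obtain s where s0: "s \<in> set [j+1..<m+1]" "u = R s (a+1)" by (auto simp only: set_map)
    then have s: "j < s" "s \<le> m" "u = R s (a+1)" by (auto simp del: upt_Suc)
    show "qc u (R j (a+1)) (- qX)" unfolding s(3) by (rule colq) (use assms s in auto)
  qed
  then obtain c where c: "P2 * R j (a+1) = \<phi> c * R j (a+1) * P2" unfolding qc_def by blast
  have "Row (a+1) * R j (a+1) = P1 * R j (a+1) * (P2 * R j (a+1))" unfolding rw by (simp add: mult.assoc)
  also have "\<dots> = \<phi> c * (P1 * (R j (a+1) * R j (a+1)) * P2)" unfolding c by (simp add: ps mult.assoc)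
  also have "\<dots> = 0" using sqz[of j "a+1"] assms by simp
  finally show ?thesis .
qed

lemma V: assumes "m < a" "a < m + n"
  shows "p \<le> m \<Longrightarrow> p < j \<Longrightarrow> j \<le> m \<Longrightarrow> Row (a+1) * Yp a p * R j (a+1) = 0"
proof (induction p arbitrary: j)
  case 0 then show ?case using Xx[of j a] assms by (simp add: Yp_def)
next
  case (Suc p)
  have Y: "Yp a (Suc p) = Yp a p * R (p+1) a" unfolding Yp_def by simp
  obtain c0 c' where c: "c0 \<noteq> 0" and e: "\<phi> c0 * (R (p+1) a * R j (a+1)) = - (R j (a+1) * R (p+1) a) - \<phi> c' * (R (p+1) (a+1) * R j a)"
    using crossR[of "p+1" j a] Suc.prems assms by auto
  have z1: "Row (a+1) * Yp a p * R j (a+1) = 0" using Suc.IH[of j] Suc.prems by simp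
  have z2: "Row (a+1) * Yp a p * R (p+1) (a+1) = 0" using Suc.IH[of "p+1"] Suc.prems by simp
  have "\<phi> c0 * (Row (a+1) * Yp a (Suc p) * R j (a+1)) = Row (a+1) * Yp a p * (\<phi> c0 * (R (p+1) a * R j (a+1)))"
    unfolding Y by (simp add: ps mult.assoc)
  also have "\<dots> = - ((Row (a+1) * Yp a p * R j (a+1)) * R (p+1) a) - \<phi> c' * ((Row (a+1) * Yp a p * R (p+1) (a+1)) * R j a)"
    unfolding e by (simp add: algebra_simps ps)
  also have "\<dots> = 0" unfolding z1 z2 by simp
  finally have "\<phi> c0 * (Row (a+1) * Yp a (Suc p) * R j (a+1)) = 0" .
  then have "(\<phi> (inverse c0) * \<phi> c0) * (Row (a+1) * Yp a (Suc p) * R j (a+1)) = 0" by (simp add: mult.assoc)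
  then show ?case using pinv'[OF c] by simp
qed

lemma bigstep: assumes "m < a" "a < m + n"
  shows "p \<le> m \<Longrightarrow> qc (F a) (Row (a+1) * Yp a p) (qX ^ m * inverse qX ^ p)"
proof (induction p)
  case 0
  have "qc (F a) (Row (a+1)) (qX ^ length (map (\<lambda>i. R i (a+1)) [1..<m+1]))"
    unfolding Row_def
  proof (rule qc_prod2, intro ballI)
    fix u assume "u \<in> set (map (\<lambda>i. R i (a+1)) [1..<m+1])"
    then obtain i where i: "1 \<le> i" "i \<le> m" "u = R i (a+1)" by (auto simp del: upt_Suc)
    have "qc (F a) (R i (a+1)) (inverse (qq m a))" by (rule RE) (use assms i in auto)
    then show "qc (F a) u qX" using i qq_gt[of a] assms by simp
  qed
  then show ?case by (simp add: Yp_def del: upt_Suc)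
next
  case (Suc p)
  have IH: "F a * (Row (a+1) * Yp a p) = \<phi> (qX ^ m * inverse qX ^ p) * (Row (a+1) * Yp a p) * F a"
    using Suc.IH Suc.prems unfolding qc_def by simp
  have Y: "Yp a (Suc p) = Yp a p * R (p+1) a" unfolding Yp_def by simp
  have "Suc a - a = Suc 0" by simp
  then have x: "R (p+1) (a+1) = br (inverse qX) (R (p+1) a) (F a)"
    using split[of "p+1" a "a+1"] Suc.prems assms qq_gt[of a] by simp
  have fy: "F a * R (p+1) a = R (p+1) (a+1) + \<phi> (inverse qX) * (R (p+1) a * F a)"
    unfolding x br_def by (simp add: mult.assoc)
  have z: "Row (a+1) * Yp a p * R (p+1) (a+1) = 0" using V[OF assms, of p "p+1"] Suc.prems by simp
  have "F a * (Row (a+1) * Yp a (Suc p)) = (F a * (Row (a+1) * Yp a p)) * R (p+1) a"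
    unfolding Y by (simp add: mult.assoc)
  also have "\<dots> = \<phi> (qX ^ m * inverse qX ^ p) * (Row (a+1) * Yp a p * (F a * R (p+1) a))"
    unfolding IH by (simp add: mult.assoc)
  also have "\<dots> = \<phi> (qX ^ m * inverse qX ^ p) * (Row (a+1) * Yp a p * R (p+1) (a+1))
      + \<phi> (qX ^ m * inverse qX ^ p * inverse qX) * (Row (a+1) * Yp a p * R (p+1) a * F a)"
    unfolding fy by (simp add: algebra_simps ps)
  also have "\<dots> = \<phi> (qX ^ m * inverse qX ^ Suc p) * (Row (a+1) * Yp a (Suc p)) * F a"
    unfolding z Y by (simp add: ac_simps)
  finally show ?case unfolding qc_def .
qed

lemma big: assumes "m < a" "a < m + n" shows "qc (F a) (Row (a+1) * Row a) 1"
proof -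
  have "Row a = Yp a m" unfolding Row_def Yp_def ..
  moreover have "qX ^ m * inverse qX ^ m = 1" using qX_nz by (simp add: power_mult_distrib[symmetric])
  ultimately show ?thesis using bigstep[OF assms, of m] by simp
qed

end


context uq
begin

lemma prodrow_qc: "(\<And>i. i \<in> set L \<Longrightarrow> qc x (g i) 1) \<Longrightarrow> qc x (prod_list (map g L)) 1"
proof (induction L)
  case Nil then show ?case by (simp add: qc1_iff)
next
  case (Cons a L) then show ?case using qc_mult2[of x "g a" 1 "prod_list (map g L)" 1] by simp
qed

lemma rowk: assumes "1 \<le> k" "k < m" "m < t" "t \<le> m + n"
  shows "qc (F k) (Row t) 1"
proof -
  have L: "[1..<m+1] = [1..<k] @ k # (k+1) # [k+2..<m+1]"
    using upt_split[of 1 k "m+1"] upt_conv_Cons[of k "m+1"] upt_conv_Cons[of "k+1" "m+1"] assms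
    by (simp del: upt_Suc)
  have rw: "Row t = prod_list (map (\<lambda>i. R i t) [1..<k]) * (R k t * R (k+1) t) * prod_list (map (\<lambda>i. R i t) [k+2..<m+1])"
    unfolding Row_def L by (simp add: mult.assoc del: upt_Suc)
  have q1: "qc (F k) (prod_list (map (\<lambda>i. R i t) [1..<k])) 1"
  proof (rule prodrow_qc)
    fix i assume "i \<in> set [1..<k]"
    then have i: "1 \<le> i" "i < k" by (auto simp del: upt_Suc)
    have "qc (F k) (R i t) (if k = m then -1 else 1)" by (rule G2) (use assms i in auto)
    then show "qc (F k) (R i t) 1" using assms by simp
  qed
  have q3: "qc (F k) (prod_list (map (\<lambda>i. R i t) [k+2..<m+1])) 1"
  proof (rule prodrow_qc)
    fix i assume "i \<in> set [k+2..<m+1]"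
    then have i: "k + 2 \<le> i" "i \<le> m" by (auto simp del: upt_Suc)
    show "qc (F k) (R i t) 1" by (rule farFR) (use assms i in auto)
  qed
  have q2: "qc (F k) (R k t * R (k+1) t) 1"
  proof -
    have le: "F k * R k t = \<phi> qX * R k t * F k" using LE[of k t] assms qq_le[of "k+1"] unfolding qc_def by simp
    have st: "R k t = br qX (F k) (R (k+1) t)" using Rstep[of k t] assms qq_le[of "k+1"] by simp
    have fy: "\<phi> qX * (F k * R (k+1) t) = R (k+1) t * F k - R k t"
      by (simp add: st br_def mult.assoc)
    have zz: "R k t * R k t = 0" using sqz[of k t] assms by simp
    have "F k * (R k t * R (k+1) t) = R k t * (\<phi> qX * (F k * R (k+1) t))"
      by (simp add: mult.assoc[symmetric] le ps)
    also have "\<dots> = R k t * R (k+1) t * F k" unfolding fy by (simp add: right_diff_distrib zz mult.assoc)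
    finally show ?thesis unfolding qc1_iff .
  qed
  show ?thesis unfolding rw using qc_mult2[OF qc_mult2[OF q1 q2] q3] by simp
qed

lemma Fk_P: assumes "1 \<le> k" "k < m + n" "k \<noteq> m"
  shows "qc (F k) (F_I1 \<phi> m n F) 1"
proof (cases "k < m")
  case True
  show ?thesis unfolding FI1_rows
  proof (rule prodrow_qc)
    fix t assume "t \<in> set (rev [m+1..<m+n+1])"
    then have t: "m < t" "t \<le> m + n" by (auto simp del: upt_Suc)
    show "qc (F k) (Row t) 1" by (rule rowk) (use assms True t in auto)
  qed
next
  case False
  then have a: "m < k" using assms by simp
  have L: "rev [m+1..<m+n+1] = rev [k+2..<m+n+1] @ [k+1, k] @ rev [m+1..<k]"
    using upt_split[of "m+1" k "m+n+1"] upt_conv_Cons[of k "m+n+1"] upt_conv_Cons[of "k+1" "m+n+1"] a assms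
    by (simp del: upt_Suc)
  have rw: "F_I1 \<phi> m n F = prod_list (map Row (rev [k+2..<m+n+1])) * (Row (k+1) * Row k) * prod_list (map Row (rev [m+1..<k]))"
    unfolding FI1_rows L by (simp add: mult.assoc del: upt_Suc)
  have q1: "qc (F k) (prod_list (map Row (rev [k+2..<m+n+1]))) 1"
  proof (rule prodrow_qc)
    fix t assume "t \<in> set (rev [k+2..<m+n+1])"
    then have t: "k + 2 \<le> t" "t \<le> m + n" by (auto simp del: upt_Suc)
    show "qc (F k) (Row t) 1" unfolding Row_def
    proof (rule prodrow_qc)
      fix i assume "i \<in> set [1..<m+1]"
      then have i: "1 \<le> i" "i \<le> m" by (auto simp del: upt_Suc)
      have "qc (F k) (R i t) (if k = m then -1 else 1)" by (rule G2) (use assms a i t in auto)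
      then show "qc (F k) (R i t) 1" using assms by simp
    qed
  qed
  have q3: "qc (F k) (prod_list (map Row (rev [m+1..<k]))) 1"
  proof (rule prodrow_qc)
    fix t assume "t \<in> set (rev [m+1..<k])"
    then have t: "m < t" "t < k" by (auto simp del: upt_Suc)
    show "qc (F k) (Row t) 1" unfolding Row_def
    proof (rule prodrow_qc)
      fix i assume "i \<in> set [1..<m+1]"
      then have i: "1 \<le> i" "i \<le> m" by (auto simp del: upt_Suc)
      show "qc (F k) (R i t) 1" by (rule farFR) (use assms a i t in auto)
    qed
  qed
  show ?thesis unfolding rw using qc_mult2[OF qc_mult2[OF q1 big[OF a assms(2)]] q3] by simp
qed

end

theorem lemma5p7:
  fixes m n :: nat and \<phi> :: "Cq \<Rightarrow> 'a::ring_1" and K Ki E F :: "nat \<Rightarrow> 'a" and i j :: nat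
  assumes "1 \<le> m" and "1 \<le> n"
    and "Uq_rels m n \<phi> K Ki E F"
    and "(i, j) \<in> I0 m n"
  shows "\<exists>z::int. Fij \<phi> m F i j * F_I1 \<phi> m n F = \<phi> (qX powi z) * F_I1 \<phi> m n F * Fij \<phi> m F i j"
proof -
  interpret uq m n \<phi> K Ki E F using assms by unfold_locales
  have ij: "(1 \<le> i \<and> i < j \<and> j \<le> m) \<or> (m + 1 \<le> i \<and> i < j \<and> j \<le> m + n)"
    using assms(4) unfolding I0_def by auto
  have "qc (R i j) (F_I1 \<phi> m n F) 1"
  proof (rule hom1')
    show "i < j" using ij by auto
    fix r assume "i \<le> r" "r < j"
    then show "qc (F r) (F_I1 \<phi> m n F) 1" using Fk_P[of r] ij by auto
  qed
  then have "Fij \<phi> m F i j * F_I1 \<phi> m n F = \<phi> (qX powi 0) * F_I1 \<phi> m n F * Fij \<phi> m F i j"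
    unfolding qc_def Fij_def by simp
  then show ?thesis by blast
qed


end
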